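(* Let bidder $i$ have a constraint-homogeneous valuation with interest set $S$ and per-unit value $\hat v$, let $s^*=\lceil |S|/2\rceil$, and let $b_i'$ be the Core Deviation of $i$. Let $b$ be any strategy profile and let $p_1\le p_2\le\dots\le p_{|S|}$ be the prices at which the items of $S$ are sold under $b$, sorted in non-decreasing order. If bidder $i$ wins fewer than $s^*$ items of $S$ in the profile $(b_i'(b_i),b_{-i})$, then $p_{s^*}\ge \hat v/2$.
   Context: Draft auction: $n$ bidders, items $[m]$; rounds are run while the set $I$ of remaining items is nonempty: each bidder submits a sealed bid $b_i\ge0$ and a set $X_i\subseteq I$; the highest bidder (ties arbitrary) gets her set (removed from $I$) and pays her bid times its size; winner, winning bid and bundle are announced. A strategy maps observed histories to actions. The price at which an item is sold is the winning bid of the round in which it is allocated. Constraint-homogeneous valuation: $v(T)=\hat v|T\cap S|$. Items of $S$ are called units. For the original strategy $b_i$ (within profile $b$), $b_{it}$ denotes $i$'s bid in auction $t$, $k_{it}$ the number of units she obtains in auction $t$, $k_{i,<t}$ the number obtained before auction $t$. Core Deviation $b_i'$: let $b_i^*=\hat v/2$. In every auction $t$ she bids $\max\{b_i^*,b_{it}\}$. If she wins with bid $b_i^*$ (i.e. $b_i^*>b_{it}$), she takes $s^*-k_{i,<t}$ units of $S$ and drops out. If she wins with bid $b_{it}$, she takes exactly what she took under $b_i$ in auction $t$. She keeps bidding this way until she has acquired $s^*$ units or the remaining units are not enough to complete $s^*$ units. *)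

theory Defs
  imports Complex_Main
begin

(* Draft auction model.
   Bidders are the naturals 0..<n, items are 1..m.
   A public history is the list of announcements (winner, winning bid, bundle). *)

type_synonym hist = "(nat \<times> real \<times> nat set) list"
type_synonym strategy = "hist \<Rightarrow> real \<times> nat set"   (* bid and requested set *)
type_synonym profile = "nat \<Rightarrow> strategy"

definition ch_valuation :: "nat set \<Rightarrow> real \<Rightarrow> nat set \<Rightarrow> real" where
  "ch_valuation S vhat T = vhat * real (card (T \<inter> S))"

definition remaining :: "nat \<Rightarrow> hist \<Rightarrow> nat set" where
  "remaining m h = {1..m} - \<Union> ((\<lambda>a. snd (snd a)) ` set h)"

definition valid_profile :: "nat \<Rightarrow> nat \<Rightarrow> profile \<Rightarrow> bool" where
  "valid_profile n m P \<longleftrightarrow>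
     (\<forall>h j. j < n \<longrightarrow> 0 \<le> fst (P j h) \<and> snd (P j h) \<subseteq> remaining m h)"

definition top_bidders :: "nat \<Rightarrow> profile \<Rightarrow> hist \<Rightarrow> nat set" where
  "top_bidders n P h = {j. j < n \<and> (\<forall>k<n. fst (P k h) \<le> fst (P j h))}"

definition round_winner :: "nat \<Rightarrow> (hist \<Rightarrow> nat \<Rightarrow> nat) \<Rightarrow> profile \<Rightarrow> hist \<Rightarrow> nat" where
  "round_winner n rank P h = arg_min (rank h) (\<lambda>j. j \<in> top_bidders n P h)"

definition auction_step :: "nat \<Rightarrow> nat \<Rightarrow> (hist \<Rightarrow> nat \<Rightarrow> nat) \<Rightarrow> profile \<Rightarrow> hist \<Rightarrow> hist" where
  "auction_step n m rank P h =
     (if remaining m h = {} then h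
      else (let w = round_winner n rank P h in h @ [(w, fst (P w h), snd (P w h))]))"

primrec run :: "nat \<Rightarrow> nat \<Rightarrow> (hist \<Rightarrow> nat \<Rightarrow> nat) \<Rightarrow> profile \<Rightarrow> nat \<Rightarrow> hist" where
  "run n m rank P 0 = []"
| "run n m rank P (Suc t) = auction_step n m rank P (run n m rank P t)"

definition sold_items :: "nat \<Rightarrow> nat \<Rightarrow> (hist \<Rightarrow> nat \<Rightarrow> nat) \<Rightarrow> profile \<Rightarrow> nat set" where
  "sold_items n m rank P = {x. \<exists>t w p X. (w, p, X) \<in> set (run n m rank P t) \<and> x \<in> X}"

definition items_won :: "nat \<Rightarrow> nat \<Rightarrow> (hist \<Rightarrow> nat \<Rightarrow> nat) \<Rightarrow> profile \<Rightarrow> nat \<Rightarrow> nat set" where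
  "items_won n m rank P i = {x. \<exists>t p X. (i, p, X) \<in> set (run n m rank P t) \<and> x \<in> X}"

definition sale_price :: "nat \<Rightarrow> nat \<Rightarrow> (hist \<Rightarrow> nat \<Rightarrow> nat) \<Rightarrow> profile \<Rightarrow> nat \<Rightarrow> real" where
  "sale_price n m rank P x = (SOME p. \<exists>t w X. (w, p, X) \<in> set (run n m rank P t) \<and> x \<in> X)"

definition sstar :: "nat set \<Rightarrow> nat" where
  "sstar S = nat \<lceil>real (card S) / 2\<rceil>"

definition units_won_hist :: "nat set \<Rightarrow> nat \<Rightarrow> hist \<Rightarrow> nat" where
  "units_won_hist S i h = card (S \<inter> \<Union> {X. \<exists>p. (i, p, X) \<in> set h})"

(* Once inactive ("drops out") her behaviour is unconstrained. *)
definition core_deviation :: "nat \<Rightarrow> nat set \<Rightarrow> real \<Rightarrow> nat \<Rightarrow> strategy \<Rightarrow> strategy \<Rightarrow> bool" where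
  "core_deviation m S vhat i bi d \<longleftrightarrow>
     (\<forall>h. let k = units_won_hist S i h; R = S \<inter> remaining m h in
        (k < sstar S \<and> sstar S \<le> k + card R) \<longrightarrow>
          (if vhat / 2 \<le> fst (bi h) then d h = bi h
           else fst (d h) = vhat / 2 \<and> snd (d h) \<subseteq> R \<and> card (snd (d h)) = sstar S - k))"

end

theory Submission
  imports Defs "HOL-Library.Multiset"
begin

lemma step_congr:
  "(\<And>j. P j h = Q j h) \<Longrightarrow> auction_step n m rank P h = auction_step n m rank Q h"
  by (simp add: auction_step_def round_winner_def top_bidders_def)

lemma top_nonempty:
  assumes "0 < (n::nat)" shows "\<exists>j. j \<in> top_bidders n P h"
proof -
  let ?F = "(\<lambda>k. fst (P k h)) ` {..<n}"
  have fin: "finite ?F" and ne: "?F \<noteq> {}" using assms by auto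
  have "Max ?F \<in> ?F" using Max_in[OF fin ne] .
  then obtain j where j: "j < n" "fst (P j h) = Max ?F" by auto
  have "\<forall>k<n. fst (P k h) \<le> fst (P j h)"
  proof (intro allI impI)
    fix k assume "k < n"
    hence "fst (P k h) \<in> ?F" by blast
    thus "fst (P k h) \<le> fst (P j h)" using Max_ge[OF fin] j(2) by simp
  qed
  hence "j \<in> top_bidders n P h" using j(1) unfolding top_bidders_def by simp
  thus ?thesis by (rule exI)
qed

lemma winner_top:
  assumes "0 < (n::nat)" shows "round_winner n rank P h \<in> top_bidders n P h"
proof -
  obtain j where "j \<in> top_bidders n P h" using top_nonempty[OF assms] by blast
  thus ?thesis unfolding round_winner_def by (rule arg_min_natI)
qed

lemma winner_min:
  assumes "j \<in> top_bidders n P h"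
  shows "rank h (round_winner n rank P h) \<le> rank h j"
  unfolding round_winner_def using conjunct2[OF arg_min_nat_lemma[where m="rank h" and P="\<lambda>j. j \<in> top_bidders n P h", OF assms]] assms by simp

lemma winner_lt: "0 < n \<Longrightarrow> round_winner n rank P h < n"
  using winner_top[of n rank P h] unfolding top_bidders_def by simp

lemma winner_bid: "0 < n \<Longrightarrow> k < n \<Longrightarrow> fst (P k h) \<le> fst (P (round_winner n rank P h) h)"
  using winner_top[of n rank P h] unfolding top_bidders_def by simp

lemma winner_switch:
  assumes n: "0 < n" and i: "i < n" and inj: "inj_on (rank h) {..<n}"
    and c1: "fst (P' i h) = c" and c2: "fst (P i h) < c"
    and same: "\<And>j. j \<noteq> i \<Longrightarrow> P' j h = P j h"
    and ne: "round_winner n rank P' h \<noteq> i"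
  shows "round_winner n rank P h = round_winner n rank P' h"
proof -
  define w where "w = round_winner n rank P' h"
  have wT': "w \<in> top_bidders n P' h" using winner_top[OF n] w_def by blast
  have wi: "w \<noteq> i" using ne w_def by simp
  have wn: "w < n" using wT' unfolding top_bidders_def by blast
  have wT: "w \<in> top_bidders n P h"
    unfolding top_bidders_def
  proof (intro CollectI conjI allI impI)
    fix k assume k: "k < n"
    show "fst (P k h) \<le> fst (P w h)"
    proof (cases "k = i")
      case True
      have "c \<le> fst (P' w h)" using wT' i c1 unfolding top_bidders_def by force
      thus ?thesis using True c2 same[OF wi] by simp
    next
      case False
      thus ?thesis using wT' k same[OF False] same[OF wi] unfolding top_bidders_def by force
    qed
  qed (rule wn)
  have sub: "top_bidders n P h \<subseteq> top_bidders n P' h"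
  proof
    fix j assume jT: "j \<in> top_bidders n P h"
    have jn: "j < n" using jT unfolding top_bidders_def by blast
    have ji: "j \<noteq> i"
    proof
      assume "j = i"
      hence "fst (P w h) \<le> fst (P i h)" using jT wn unfolding top_bidders_def by blast
      moreover have "c \<le> fst (P' w h)" using wT' i c1 unfolding top_bidders_def by force
      ultimately show False using c2 same[OF wi] by simp
    qed
    have "fst (P w h) \<le> fst (P j h)" using jT wn unfolding top_bidders_def by blast
    moreover have "\<forall>k<n. fst (P' k h) \<le> fst (P' w h)" using wT' unfolding top_bidders_def by blast
    ultimately show "j \<in> top_bidders n P' h" using jn same[OF ji] same[OF wi]
      unfolding top_bidders_def by force
  qed
  define w0 where "w0 = round_winner n rank P h"
  have w0T: "w0 \<in> top_bidders n P h" using winner_top[OF n] w0_def by blast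
  have "rank h w0 \<le> rank h w" using winner_min[OF wT] w0_def by simp
  moreover have "rank h w \<le> rank h w0" using winner_min[OF subsetD[OF sub w0T]] w_def by simp
  moreover have "w0 < n" using w0T unfolding top_bidders_def by blast
  ultimately have "w0 = w" using inj wn by (auto dest: inj_onD)
  thus ?thesis using w0_def w_def by simp
qed

lemma comb:
  fixes f :: "nat \<Rightarrow> real"
  assumes fin: "finite S" and s1: "1 \<le> s" and sS: "s \<le> card S"
    and cnt: "card {x\<in>S. f x < c} \<le> s - 1"
  shows "c \<le> sort (map f (sorted_list_of_set S)) ! (s - 1)"
proof (rule ccontr)
  assume "\<not> ?thesis"
  hence lt: "sort (map f (sorted_list_of_set S)) ! (s - 1) < c" by simp
  define xs where "xs = sorted_list_of_set S"
  define L where "L = sort (map f xs)"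
  have lenL: "length L = card S" using fin by (simp add: L_def xs_def)
  have srt: "sorted L" by (simp add: L_def)
  have "{..<s} \<subseteq> {j. j < length L \<and> L ! j < c}"
  proof
    fix j assume "j \<in> {..<s}"
    hence j: "j \<le> s - 1" "s - 1 < length L" using s1 sS lenL by auto
    have "L ! j \<le> L ! (s-1)" using sorted_nth_mono[OF srt j] .
    thus "j \<in> {j. j < length L \<and> L ! j < c}" using lt j unfolding L_def xs_def by auto
  qed
  hence "s \<le> card {j. j < length L \<and> L ! j < c}"
    by (metis card_lessThan card_mono finite_Collect_conjI finite_lessThan lessThan_def)
  also have "\<dots> = length (filter (\<lambda>y. y < c) L)" by (simp add: length_filter_conv_card)
  also have "\<dots> = length (filter (\<lambda>y. y < c) (map f xs))"
  proof -
    have "mset (filter (\<lambda>y. y < c) L) = mset (filter (\<lambda>y. y < c) (map f xs))"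
      by (simp add: L_def)
    thus ?thesis by (metis size_mset)
  qed
  also have "\<dots> = length (filter (\<lambda>x. f x < c) xs)" by (simp add: filter_map comp_def)
  also have "\<dots> = card ({x. f x < c} \<inter> set xs)"
    by (simp add: distinct_length_filter xs_def)
  also have "\<dots> = card {x\<in>S. f x < c}" using fin by (simp add: xs_def Int_def conj_commute)
  finally show False using cnt s1 by linarith
qed


lemma step_cases:
  "auction_step n m rank P h = h \<or>
   auction_step n m rank P h = h @ [(round_winner n rank P h, fst (P (round_winner n rank P h) h), snd (P (round_winner n rank P h) h))]"
  by (simp add: auction_step_def Let_def)

lemma run_prefix:
  assumes "t \<le> t'" shows "\<exists>zs. run n m rank P t' = run n m rank P t @ zs"
  using assms
proof (induction t' rule: dec_induct)
  case base thus ?case by simp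
next
  case (step k)
  then obtain zs where "run n m rank P k = run n m rank P t @ zs" by blast
  thus ?case using step_cases[of n m rank P "run n m rank P k"] by (metis append.assoc run.simps(2))
qed

lemma run_disj:
  assumes v: "valid_profile n m P" and n: "0 < n"
  shows "\<forall>j<length (run n m rank P t). snd (snd (run n m rank P t ! j)) \<subseteq> remaining m (take j (run n m rank P t))"
proof (induction t)
  case 0 thus ?case by simp
next
  case (Suc t)
  let ?h = "run n m rank P t"
  let ?w = "round_winner n rank P ?h"
  have bnd: "snd (P ?w ?h) \<subseteq> remaining m ?h" using v winner_lt[OF n] unfolding valid_profile_def by blast
  show ?case
  proof (cases "run n m rank P (Suc t) = ?h")
    case True thus ?thesis using Suc by simp
  next
    case False
    hence eq: "run n m rank P (Suc t) = ?h @ [(?w, fst (P ?w ?h), snd (P ?w ?h))]"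
      using step_cases[of n m rank P ?h] by auto
    show ?thesis unfolding eq
    proof (intro allI impI)
      fix j assume j: "j < length (?h @ [(?w, fst (P ?w ?h), snd (P ?w ?h))])"
      show "snd (snd ((?h @ [(?w, fst (P ?w ?h), snd (P ?w ?h))]) ! j)) \<subseteq> remaining m (take j (?h @ [(?w, fst (P ?w ?h), snd (P ?w ?h))]))"
      proof (cases "j < length ?h")
        case True thus ?thesis using Suc by (simp add: nth_append)
      next
        case False
        hence "j = length ?h" using j by simp
        thus ?thesis using bnd by simp
      qed
    qed
  qed
qed

lemma list_unique:
  assumes d: "\<forall>j<length L. snd (snd (L ! j)) \<subseteq> remaining m (take j L)"
    and j: "j < length L" and j': "j' < length L"
    and x: "x \<in> snd (snd (L ! j))" and x': "x \<in> snd (snd (L ! j'))"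
  shows "j = j'"
proof (rule ccontr)
  assume ne: "j \<noteq> j'"
  { fix a b assume ab: "a < b" "b < length L" "x \<in> snd (snd (L ! a))" "x \<in> snd (snd (L ! b))"
    have "L ! a \<in> set (take b L)" using ab by (metis in_set_conv_nth length_take min.absorb4 nth_take order.strict_trans)
    hence "x \<notin> remaining m (take b L)" using ab unfolding remaining_def by blast
    moreover have "x \<in> remaining m (take b L)" using d ab by blast
    ultimately have False by blast }
  thus False using ne j j' x x' by (metis linorder_neqE_nat)
qed

lemma price_unique:
  assumes v: "valid_profile n m P" and n: "0 < n"
    and e1: "(w1, p1, X1) \<in> set (run n m rank P t1)" and e2: "(w2, p2, X2) \<in> set (run n m rank P t2)"
    and x1: "x \<in> X1" and x2: "x \<in> X2"
  shows "p1 = p2"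
proof -
  define T where "T = max t1 t2"
  obtain z1 where z1: "run n m rank P T = run n m rank P t1 @ z1" using run_prefix[of t1 T n m rank P] T_def by auto
  obtain z2 where z2: "run n m rank P T = run n m rank P t2 @ z2" using run_prefix[of t2 T n m rank P] T_def by auto
  let ?L = "run n m rank P T"
  have "(w1, p1, X1) \<in> set ?L" "(w2, p2, X2) \<in> set ?L" using e1 e2 z1 z2 by (metis Un_iff set_append)+
  then obtain j j' where j: "j < length ?L" "?L ! j = (w1, p1, X1)" and j': "j' < length ?L" "?L ! j' = (w2, p2, X2)"
    by (metis in_set_conv_nth)
  have "j = j'" using list_unique[OF run_disj[OF v n] j(1) j'(1)] j j' x1 x2 by simp
  thus ?thesis using j j' by simp
qed

lemma sale_price_eq:
  assumes v: "valid_profile n m P" and n: "0 < n"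
    and e: "(w, p, X) \<in> set (run n m rank P t)" and x: "x \<in> X"
  shows "sale_price n m rank P x = p"
proof -
  have ex: "\<exists>p t w X. (w, p, X) \<in> set (run n m rank P t) \<and> x \<in> X" using e x by blast
  have "\<exists>t w X. (w, sale_price n m rank P x, X) \<in> set (run n m rank P t) \<and> x \<in> X"
    unfolding sale_price_def by (rule someI_ex) (use ex in blast)
  then obtain t' w' X' where "(w', sale_price n m rank P x, X') \<in> set (run n m rank P t')" "x \<in> X'" by blast
  thus ?thesis using price_unique[OF v n _ e] x by blast
qed


lemma sstar_props:
  assumes "card S > 0" shows "1 \<le> sstar S" "sstar S \<le> card S"
proof -
  have "real (card S) / 2 > 0" using assms by simp
  hence "\<lceil>real (card S) / 2\<rceil> \<ge> 1" by (simp add: one_le_ceiling)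
  thus "1 \<le> sstar S" unfolding sstar_def by linarith
  have "\<lceil>real (card S) / 2\<rceil> \<le> int (card S)" by (simp add: ceiling_le_iff)
  thus "sstar S \<le> card S" unfolding sstar_def by linarith
qed

theorem mainTheorem9:
  fixes n m i :: nat and rank :: "hist \<Rightarrow> nat \<Rightarrow> nat" and b :: profile and d :: strategy
    and S :: "nat set" and vhat :: real
  assumes "i < n"
    and "S \<subseteq> {1..m}"
    and "0 \<le> vhat"
    and "\<forall>h. inj_on (rank h) {..<n}"
    and "valid_profile n m b"
    and "valid_profile n m (b(i := d))"
    and "core_deviation m S vhat i (b i) d"
    and "S \<subseteq> sold_items n m rank b"
    and "card (S \<inter> items_won n m rank (b(i := d)) i) < sstar S"
  shows "sort (map (sale_price n m rank b) (sorted_list_of_set S)) ! (sstar S - 1) \<ge> vhat / 2"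
proof -
  note A = assms
  define P' where "P' = b(i := d)"
  define H where "H t = run n m rank P' t" for t
  define G where "G t = run n m rank b t" for t
  define s where "s = sstar S"
  define c where "c = vhat / 2"
  have n0: "0 < n" using A(1) by simp
  have finS: "finite S" using A(2) finite_subset by blast
  define K where "K h = units_won_hist S i h" for h
  define act where "act h \<longleftrightarrow> K h < s \<and> s \<le> K h + card (S \<inter> remaining m h)" for h
  have kbound: "K (H t) < s" for t
  proof -
    have "S \<inter> \<Union> {X. \<exists>p. (i, p, X) \<in> set (H t)} \<subseteq> S \<inter> items_won n m rank P' i"
      unfolding items_won_def H_def by blast
    hence "K (H t) \<le> card (S \<inter> items_won n m rank P' i)"
      unfolding K_def units_won_hist_def by (intro card_mono) (use finS in auto)
    thus ?thesis using A(9) P'_def s_def by simp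
  qed
  have main: "(\<forall>s'<t. act (H s')) \<longrightarrow> H t = G t \<and> (\<forall>e\<in>set (G t). c \<le> fst (snd e))" for t
  proof (induction t)
    case 0 thus ?case by (simp add: H_def G_def)
  next
    case (Suc t)
    show ?case
    proof
      assume all: "\<forall>s'<Suc t. act (H s')"
      hence IH: "H t = G t" "\<forall>e\<in>set (G t). c \<le> fst (snd e)" using Suc by auto
      define h where "h = H t"
      have ah: "act h" using all h_def by simp
      have Rne: "remaining m h \<noteq> {}"
      proof
        assume "remaining m h = {}"
        thus False using ah unfolding act_def by auto
      qed
      define w' where "w' = round_winner n rank P' h"
      define w where "w = round_winner n rank b h"
      have Hs: "H (Suc t) = h @ [(w', fst (P' w' h), snd (P' w' h))]"
        using Rne by (simp add: H_def h_def w'_def auction_step_def Let_def)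
      have Gs: "G (Suc t) = h @ [(w, fst (b w h), snd (b w h))]"
        using Rne IH by (simp add: G_def h_def H_def w_def auction_step_def Let_def)
      have cd: "let k = units_won_hist S i h; R = S \<inter> remaining m h in
        (k < sstar S \<and> sstar S \<le> k + card R) \<longrightarrow>
          (if vhat / 2 \<le> fst (b i h) then d h = b i h
           else fst (d h) = vhat / 2 \<and> snd (d h) \<subseteq> R \<and> card (snd (d h)) = sstar S - k)"
        using spec[OF A(7)[unfolded core_deviation_def], of h] .
      have cd': "(if c \<le> fst (b i h) then d h = b i h
           else fst (d h) = c \<and> snd (d h) \<subseteq> S \<inter> remaining m h \<and> card (snd (d h)) = s - K h)"
        using cd ah unfolding act_def Let_def K_def s_def c_def by simp
      show "H (Suc t) = G (Suc t) \<and> (\<forall>e\<in>set (G (Suc t)). c \<le> fst (snd e))"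
      proof (cases "c \<le> fst (b i h)")
        case True
        hence "d h = b i h" using cd' by simp
        hence same: "P' j h = b j h" for j by (simp add: P'_def)
        have "w' = w" unfolding w'_def w_def round_winner_def top_bidders_def using same by simp
        hence eq: "H (Suc t) = G (Suc t)" using Hs Gs same by simp
        have "fst (b i h) \<le> fst (b w h)" using winner_bid[OF n0 A(1)] w_def by blast
        thus ?thesis using eq Gs IH True h_def by auto
      next
        case False
        hence dh: "fst (d h) = c" "snd (d h) \<subseteq> S \<inter> remaining m h" "card (snd (d h)) = s - K h"
          using cd' by auto
        have wi: "w' \<noteq> i"
        proof
          assume wi: "w' = i"
          hence Hs': "H (Suc t) = h @ [(i, c, snd (d h))]" using Hs dh by (simp add: P'_def)
          define Old where "Old = \<Union> {X. \<exists>p. (i, p, X) \<in> set h}"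
          have U: "\<Union> {X. \<exists>p. (i, p, X) \<in> set (H (Suc t))} = Old \<union> snd (d h)"
            unfolding Hs' Old_def by auto
          have disj: "(S \<inter> Old) \<inter> snd (d h) = {}"
            using dh(2) unfolding Old_def remaining_def by force
          have "K (H (Suc t)) = card ((S \<inter> Old) \<union> snd (d h))"
            unfolding K_def units_won_hist_def U using dh(2) by (simp add: Int_Un_distrib Int_absorb1)
          also have "\<dots> = card (S \<inter> Old) + card (snd (d h))"
            using disj finS dh(2) by (intro card_Un_disjoint) (auto intro: finite_subset)
          also have "card (S \<inter> Old) = K h" unfolding K_def units_won_hist_def Old_def by simp
          finally have "K (H (Suc t)) = s" using dh(3) kbound[of t] h_def by simp
          thus False using kbound[of "Suc t"] by simp
        qed
        have same: "j \<noteq> i \<Longrightarrow> P' j h = b j h" for j by (simp add: P'_def)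
        have "w = w'" unfolding w_def w'_def
          by (rule winner_switch[where c=c, OF n0 A(1) A(4)[rule_format]])
             (use dh(1) False wi w'_def same in \<open>auto simp: P'_def\<close>)
        hence eq: "H (Suc t) = G (Suc t)" using Hs Gs same[OF wi] by simp
        have "fst (P' i h) \<le> fst (P' w' h)" using winner_bid[OF n0 A(1)] w'_def by blast
        hence "c \<le> fst (b w h)" using dh(1) same[OF wi] \<open>w = w'\<close> by (simp add: P'_def)
        thus ?thesis using eq Gs IH h_def by auto
      qed
    qed
  qed
  have cnt: "card {x\<in>S. sale_price n m rank b x < c} \<le> s - 1"
  proof (cases "\<forall>t. act (H t)")
    case True
    have "{x\<in>S. sale_price n m rank b x < c} = {}"
    proof (rule ccontr)
      assume "{x\<in>S. sale_price n m rank b x < c} \<noteq> {}"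
      then obtain x where x: "x \<in> S" "sale_price n m rank b x < c" by blast
      obtain t w p X where e: "(w, p, X) \<in> set (G t)" "x \<in> X"
        using x(1) A(8) unfolding sold_items_def G_def by blast
      have "c \<le> p" using main[of t] True e by fastforce
      moreover have "sale_price n m rank b x = p" using sale_price_eq[OF A(5) n0] e unfolding G_def by blast
      ultimately show False using x by simp
    qed
    thus ?thesis by (metis card.empty le0)
  next
    case False
    then obtain t0 where t0: "\<not> act (H t0)" "\<forall>s'<t0. act (H s')"
    proof -
      have ex: "\<exists>t. \<not> act (H t)" using False by blast
      show ?thesis
        using that[of "LEAST t. \<not> act (H t)"] LeastI_ex[OF ex] not_less_Least[of _ "\<lambda>t. \<not> act (H t)"] by blast
    qed
    have good: "H t0 = G t0" "\<forall>e\<in>set (G t0). c \<le> fst (snd e)" using main[of t0] t0 by auto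
    have lt: "card (S \<inter> remaining m (G t0)) < s"
      using t0(1) kbound[of t0] good(1) unfolding act_def by simp
    have "{x\<in>S. sale_price n m rank b x < c} \<subseteq> S \<inter> remaining m (G t0)"
    proof
      fix x assume x: "x \<in> {x\<in>S. sale_price n m rank b x < c}"
      show "x \<in> S \<inter> remaining m (G t0)"
      proof (rule ccontr)
        assume "x \<notin> S \<inter> remaining m (G t0)"
        hence "x \<in> \<Union> ((\<lambda>a. snd (snd a)) ` set (G t0))" using x A(2) unfolding remaining_def by auto
        then obtain w p X where e: "(w, p, X) \<in> set (G t0)" "x \<in> X" by auto
        have "c \<le> p" using good(2) e by fastforce
        moreover have "sale_price n m rank b x = p" using sale_price_eq[OF A(5) n0] e unfolding G_def by blast
        ultimately show False using x by simp
      qed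
    qed
    hence "card {x\<in>S. sale_price n m rank b x < c} \<le> card (S \<inter> remaining m (G t0))"
      using finS by (intro card_mono) auto
    thus ?thesis using lt by simp
  qed
  have cS: "card S > 0"
  proof (rule ccontr)
    assume "\<not> card S > 0"
    hence "card S = 0" by simp
    hence "sstar S = 0" unfolding sstar_def by simp
    thus False using A(9) by simp
  qed
  show ?thesis
    using comb[OF finS sstar_props[OF cS] cnt[unfolded s_def]] c_def by simp
qed

end
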